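(* Consider a controlled Markov chain with finite state space $X$, finite action set $U$, unknown transition probabilities $p$ and rewards $r(x,u)\in(0,1]$, controlled by the RBMLE algorithm described in the context. For an episode $k$ and $\pi\in\Pi_{sd}$, let \[ \theta_{k,\pi}\in\arg\max_{\theta\in\Theta}\Big\{\alpha(\tau_k)J(\theta,\pi)-\sum_{(x,u)}n_k(x,u)KL(\hat p_k(x,u),\theta(x,u))\Big\}. \] Then \[ |\theta_{k,\pi}(x,y,u)-\hat p_k(x,y,u)|\le d_2(x,u;\tau_k)\quad\forall (x,y,u)\in X\times X\times U, \] where $d_2(x,u;t):=\sqrt{\frac{\alpha(t)}{2n(x,u;t)}}$.
   Context: $\Pi_{sd}$ denotes the stationary deterministic policies $X\to U$. For a transition kernel $\theta$ and policy $\pi$, $J(\theta,\pi)$ is the long-term average reward $\liminf_T\frac1T\mathbb{E}\sum_{t=1}^Tr(x(t),u(t))$ under $\theta$ and $\pi$. $\Theta$ is the set of $\theta\in[0,1]^{|X|\times|X|\times|U|}$ with $\theta(x,y,u)=0$ whenever $p(x,y,u)=0$ (known zero pattern) and $\sum_y\theta(x,y,u)=1$; $\theta(x,u)=\{\theta(x,y,u)\}_{y}$. $KL(p_1,p_2)=\sum_xp_1(x)\log\frac{p_1(x)}{p_2(x)}$. $n(x,u;t)$ is the number of times action $u$ was applied in state $x$ up to time $t$, $n(x,y,u;t)$ the number of those followed by a move to $y$, $\hat p(x,y,u;t)=\frac{n(x,y,u;t)}{n(x,u;t)\vee1}$. Episodes $\mathcal{E}_k=[\tau_k,\tau_{k+1}-1]$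 with $|\mathcal{E}_k|=2^k$; $n_k=n(\cdot;\tau_k)$, $\hat p_k=\hat p(\tau_k)$; $\alpha(t)=a\log(t^b|X|^2|U|)$ with constants $a>0$, $b>2$. RBMLE: index $I_k(\pi)=\max_{\theta\in\Theta}\{\alpha(\tau_k)J(\theta,\pi)-\sum_{(x,u)}n_k(x,u)KL(\hat p_k(x,u),\theta(x,u))\}$, and during episode $k$ the policy $\pi_k\in\arg\max_{\pi\in\Pi_{sd}}I_k(\pi)$ is applied. *)

theory Defs
  imports Complex_Main "HOL-Library.Extended_Real" "HOL-Library.Liminf_Limsup"
begin

text \<open>Transition kernels: th x y u = probability of moving from x to y under action u.\<close>

definition Theta :: "('x::finite \<Rightarrow> 'x \<Rightarrow> 'u::finite \<Rightarrow> real) \<Rightarrow> ('x \<Rightarrow> 'x \<Rightarrow> 'u \<Rightarrow> real) set" where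
  "Theta p = {th. (\<forall>x y u. 0 \<le> th x y u \<and> th x y u \<le> 1)
                 \<and> (\<forall>x y u. p x y u = 0 \<longrightarrow> th x y u = 0)
                 \<and> (\<forall>x u. (\<Sum>y\<in>UNIV. th x y u) = 1)}"

text \<open>Distribution of the state at time t+1 under kernel th and stationary
  deterministic policy pl, started from state x0 at time 1.\<close>

fun state_dist :: "('x::finite \<Rightarrow> 'x \<Rightarrow> 'u \<Rightarrow> real) \<Rightarrow> ('x \<Rightarrow> 'u) \<Rightarrow> 'x \<Rightarrow> nat \<Rightarrow> 'x \<Rightarrow> real" where
  "state_dist th pl x0 0 = (\<lambda>y. if y = x0 then 1 else 0)"
| "state_dist th pl x0 (Suc t) = (\<lambda>y. \<Sum>x\<in>UNIV. state_dist th pl x0 t x * th x y (pl x))"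

definition avg_reward :: "('x::finite \<Rightarrow> 'u \<Rightarrow> real) \<Rightarrow> ('x \<Rightarrow> 'x \<Rightarrow> 'u \<Rightarrow> real) \<Rightarrow> ('x \<Rightarrow> 'u) \<Rightarrow> 'x \<Rightarrow> real" where
  "avg_reward r th pl x0 = real_of_ereal (liminf (\<lambda>T::nat.
      ereal ((1 / real T) * (\<Sum>t<T. \<Sum>x\<in>UNIV. state_dist th pl x0 t x * r x (pl x)))))"

definition KL :: "('x::finite \<Rightarrow> real) \<Rightarrow> ('x \<Rightarrow> real) \<Rightarrow> ereal" where
  "KL p1 p2 = (\<Sum>x\<in>UNIV. if p1 x = 0 then 0 else if p2 x = 0 then \<infinity>
                          else ereal (p1 x * ln (p1 x / p2 x)))"

text \<open>Counts along a trajectory (xs t, us t), t = 1,2,...; "up to time t" = times 1..t-1.\<close>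

definition cnt_xu :: "(nat \<Rightarrow> 'x) \<Rightarrow> (nat \<Rightarrow> 'u) \<Rightarrow> 'x \<Rightarrow> 'u \<Rightarrow> nat \<Rightarrow> nat" where
  "cnt_xu xs us x u t = card {s\<in>{1..<t}. xs s = x \<and> us s = u}"

definition cnt_xyu :: "(nat \<Rightarrow> 'x) \<Rightarrow> (nat \<Rightarrow> 'u) \<Rightarrow> 'x \<Rightarrow> 'x \<Rightarrow> 'u \<Rightarrow> nat \<Rightarrow> nat" where
  "cnt_xyu xs us x y u t = card {s\<in>{1..<t}. xs s = x \<and> us s = u \<and> xs (Suc s) = y}"

definition phat :: "(nat \<Rightarrow> 'x) \<Rightarrow> (nat \<Rightarrow> 'u) \<Rightarrow> 'x \<Rightarrow> 'x \<Rightarrow> 'u \<Rightarrow> nat \<Rightarrow> real" where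
  "phat xs us x y u t = real (cnt_xyu xs us x y u t) / real (max (cnt_xu xs us x u t) 1)"

text \<open>Episode start times: tau_0 = 1, |E_k| = 2^k, hence tau_k = 2^k.\<close>

definition tau :: "nat \<Rightarrow> nat" where
  "tau k = 2 ^ k"

definition alpha :: "real \<Rightarrow> real \<Rightarrow> nat \<Rightarrow> nat \<Rightarrow> nat \<Rightarrow> real" where
  "alpha a b nX nU t = a * ln (real t powr b * real nX ^ 2 * real nU)"

text \<open>RBMLE objective of episode k for policy pl and kernel th
  (J is evaluated from the initial state xs 1).\<close>

definition rbmle_obj :: "('x::finite \<Rightarrow> 'u::finite \<Rightarrow> real) \<Rightarrow> real \<Rightarrow> real \<Rightarrow> (nat \<Rightarrow> 'x) \<Rightarrow> (nat \<Rightarrow> 'u)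
    \<Rightarrow> nat \<Rightarrow> ('x \<Rightarrow> 'u) \<Rightarrow> ('x \<Rightarrow> 'x \<Rightarrow> 'u \<Rightarrow> real) \<Rightarrow> ereal" where
  "rbmle_obj r a b xs us k pl th =
     ereal (alpha a b (card (UNIV :: 'x set)) (card (UNIV :: 'u set)) (tau k) * avg_reward r th pl (xs 1))
     - (\<Sum>x\<in>UNIV. \<Sum>u\<in>UNIV. ereal (real (cnt_xu xs us x u (tau k)))
           * KL (\<lambda>y. phat xs us x y u (tau k)) (\<lambda>y. th x y u))"

definition rbmle_index :: "('x::finite \<Rightarrow> 'x \<Rightarrow> 'u::finite \<Rightarrow> real) \<Rightarrow> ('x \<Rightarrow> 'u \<Rightarrow> real) \<Rightarrow> real \<Rightarrow> real
    \<Rightarrow> (nat \<Rightarrow> 'x) \<Rightarrow> (nat \<Rightarrow> 'u) \<Rightarrow> nat \<Rightarrow> ('x \<Rightarrow> 'u) \<Rightarrow> ereal" where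
  "rbmle_index p r a b xs us k pl = (SUP th\<in>Theta p. rbmle_obj r a b xs us k pl th)"

end

theory Submission
  imports Defs
begin

definition xl :: "real \<Rightarrow> real \<Rightarrow> real" where
  "xl a b = (if a = 0 then 0 else a * ln (a / b))"

lemma binP1:
  fixes a b :: real
  assumes "0 \<le> a" "a \<le> b" "b < 1"
  shows "2 * (a - b)^2 \<le> xl a b + xl (1-a) (1-b)"
proof (cases "a = b")
  case True then show ?thesis by (simp add: xl_def)
next
  case False
  hence ab: "a < b" using assms by simp
  define g where "g t = - a * ln t - (1-a) * ln (1-t) - 2*(a-t)^2" for t :: real
  have "g a \<le> g b"
  proof (rule DERIV_nonneg_imp_increasing_open[OF assms(2)])
    fix t assume t: "a < t" "t < b"
    hence t0: "0 < t" "t < 1" using assms by auto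
    have d1: "DERIV (\<lambda>t. ln t) t :> 1/t" using t0 by (intro DERIV_ln_divide) simp
    have d2: "DERIV (\<lambda>t. ln (1-t)) t :> 1/(1-t) * (0-1)"
      using t0 by (intro DERIV_chain2[OF DERIV_ln_divide] DERIV_diff DERIV_const DERIV_ident) simp
    have d3: "DERIV (\<lambda>t. (a-t)*(a-t)) t :> (0-1)*(a-t) + (0-1)*(a-t)"
      by (intro DERIV_mult DERIV_diff DERIV_const DERIV_ident)
    have "DERIV g t :> (- a * (1/t) - (1-a) * (1/(1-t) * (0-1)) - 2*((0-1)*(a-t) + (0-1)*(a-t)))"
      unfolding g_def power2_eq_square by (intro DERIV_diff DERIV_cmult d1 d2 d3)
    moreover have "(- a * (1/t) - (1-a) * (1/(1-t) * (0-1)) - 2*((0-1)*(a-t) + (0-1)*(a-t))) = (- a / t + (1-a)/(1-t) + 4*(a-t))"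
      by (simp add: algebra_simps)
    ultimately have "DERIV g t :> (- a / t + (1-a)/(1-t) + 4*(a-t))" by metis
    moreover have "- a / t + (1-a)/(1-t) + 4*(a-t) = (t-a)*(2*t-1)^2/(t*(1-t))"
      using t0 by (simp add: field_simps power2_eq_square)
    moreover have "(t-a)*(2*t-1)^2/(t*(1-t)) \<ge> 0" using t t0 by simp
    ultimately show "\<exists>y. DERIV g t :> y \<and> 0 \<le> y" by auto
  next
    show "continuous_on {a..b} g"
    proof (cases "a = 0")
      case True
      have "g = (\<lambda>t. - ln (1-t) - 2*(a-t)^2)" using True by (auto simp: g_def)
      then show ?thesis using assms by (auto intro!: continuous_intros)
    next
      case False
      then show ?thesis unfolding g_def using assms by (auto intro!: continuous_intros)
    qed
  qed
  moreover have "xl a b = - a * ln b - (- a * ln a)"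
    using assms ab by (cases "a = 0") (auto simp: xl_def ln_div algebra_simps)
  moreover have "xl (1-a) (1-b) = - (1-a) * ln (1-b) - (- (1-a) * ln (1-a))"
    using assms ab by (auto simp: xl_def ln_div algebra_simps)
  ultimately show ?thesis unfolding g_def by (simp add: algebra_simps)
qed

lemma binP:
  fixes a b :: real
  assumes "0 \<le> a" "a \<le> 1" "0 < b" "b < 1"
  shows "2 * (a - b)^2 \<le> xl a b + xl (1-a) (1-b)"
proof (cases "a \<le> b")
  case True then show ?thesis using binP1 assms by simp
next
  case False
  have "2 * ((1-a) - (1-b))^2 \<le> xl (1-a) (1-b) + xl (1-(1-a)) (1-(1-b))"
    using False assms by (intro binP1) auto
  then show ?thesis by (simp add: power2_commute algebra_simps)
qed

lemma mem_le_sum':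
  fixes f :: "'a \<Rightarrow> 'b::ordered_comm_monoid_add"
  assumes "finite A" "i \<in> A" "\<And>x. x \<in> A \<Longrightarrow> 0 \<le> f x"
  shows "f i \<le> sum f A"
  using sum_mono2[of A "{i}" f] assms by simp

lemma logsum:
  fixes P Q :: "'a \<Rightarrow> real"
  assumes fin: "finite B" and nn: "\<And>x. x \<in> B \<Longrightarrow> 0 \<le> P x \<and> 0 \<le> Q x"
    and pos: "\<And>x. x \<in> B \<Longrightarrow> P x \<noteq> 0 \<Longrightarrow> Q x \<noteq> 0"
  shows "xl (sum P B) (sum Q B) \<le> (\<Sum>x\<in>B. xl (P x) (Q x))"
proof (cases "sum P B = 0")
  case True
  hence "\<forall>x\<in>B. P x = 0" using sum_nonneg_eq_0_iff[OF fin] nn by blast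
  then show ?thesis using True by (simp add: xl_def)
next
  case False
  then obtain x0 where x0: "x0 \<in> B" "P x0 \<noteq> 0" by (meson sum.neutral)
  hence "Q x0 > 0" using nn pos by force
  hence QB: "sum Q B > 0" using member_le_sum[OF x0(1), of Q] fin nn by force
  have PB: "sum P B > 0" using False sum_nonneg[of B P] nn by force
  define c where "c = sum P B / sum Q B"
  have c0: "c > 0" using PB QB by (simp add: c_def)
  have trm: "P x * ln c + P x - c * Q x \<le> xl (P x) (Q x)" if x: "x \<in> B" for x
  proof (cases "P x = 0")
    case True then show ?thesis using c0 nn[OF x] by (simp add: xl_def)
  next
    case False
    have px: "P x > 0" using False nn[OF x] by simp
    have qx: "Q x > 0" using pos[OF x False] nn[OF x] by simp
    have "ln (c * Q x / P x) \<le> c * Q x / P x - 1" using c0 px qx by (intro ln_le_minus_one) simp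
    hence "P x * ln (c * Q x / P x) \<le> P x * (c * Q x / P x - 1)" using px by (simp add: mult_left_mono)
    also have "\<dots> = c * Q x - P x" using px by (simp add: field_simps)
    finally have L: "P x * ln (c * Q x / P x) \<le> c * Q x - P x" .
    have e1: "ln (c * Q x / P x) = ln c + ln (Q x) - ln (P x)" using c0 px qx by (simp add: ln_div ln_mult)
    have e2: "ln (P x / Q x) = ln (P x) - ln (Q x)" using px qx by (simp add: ln_div)
    have "P x * ln (P x / Q x) = P x * ln c - P x * ln (c * Q x / P x)"
      unfolding e1 e2 by (simp add: algebra_simps)
    then show ?thesis using L False by (simp add: xl_def)
  qed
  have "(\<Sum>x\<in>B. P x * ln c + P x - c * Q x) \<le> (\<Sum>x\<in>B. xl (P x) (Q x))"
    using trm by (rule sum_mono)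
  moreover have "(\<Sum>x\<in>B. P x * ln c + P x - c * Q x) = sum P B * ln c + sum P B - c * sum Q B"
    by (simp add: sum.distrib sum_subtractf sum_distrib_left sum_distrib_right)
  moreover have "c * sum Q B = sum P B" using QB by (simp add: c_def)
  ultimately show ?thesis using False by (simp add: xl_def c_def)
qed

lemma KL_pinsker:
  fixes P Q :: "'x::finite \<Rightarrow> real"
  assumes Pn: "\<And>x. 0 \<le> P x" and Qn: "\<And>x. 0 \<le> Q x"
    and Ps: "(\<Sum>x\<in>UNIV. P x) = 1" and Qs: "(\<Sum>x\<in>UNIV. Q x) = 1"
  shows "ereal (2 * (P y - Q y)^2) \<le> KL P Q"
proof (cases "\<exists>x. P x \<noteq> 0 \<and> Q x = 0")
  case True
  then have "KL P Q = \<infinity>" unfolding KL_def by (subst sum_Pinfty) auto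
  then show ?thesis by simp
next
  case False
  hence pos: "\<And>x. P x \<noteq> 0 \<Longrightarrow> Q x \<noteq> 0" by blast
  have "KL P Q = ereal (\<Sum>x\<in>UNIV. xl (P x) (Q x))"
    unfolding KL_def sum_ereal[symmetric] using pos by (intro sum.cong) (auto simp: xl_def)
  moreover have "2 * (P y - Q y)^2 \<le> (\<Sum>x\<in>UNIV. xl (P x) (Q x))"
  proof -
    let ?B = "UNIV - {y}"
    have sP: "sum P ?B = 1 - P y" using Ps sum.remove[of UNIV y P] by simp
    have sQ: "sum Q ?B = 1 - Q y" using Qs sum.remove[of UNIV y Q] by simp
    have split: "(\<Sum>x\<in>UNIV. xl (P x) (Q x)) = xl (P y) (Q y) + (\<Sum>x\<in>?B. xl (P x) (Q x))"
      using sum.remove[of UNIV y "\<lambda>x. xl (P x) (Q x)"] by simp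
    have ls: "xl (1 - P y) (1 - Q y) \<le> (\<Sum>x\<in>?B. xl (P x) (Q x))"
      using logsum[of ?B P Q] Pn Qn pos sP sQ by simp
    have Py1: "P y \<le> 1" using member_le_sum[of y UNIV P] Pn Ps by simp
    have Qy1: "Q y \<le> 1" using member_le_sum[of y UNIV Q] Qn Qs by simp
    show ?thesis
    proof (cases "Q y = 0")
      case True
      hence "P y = 0" using pos by blast
      then show ?thesis using True split ls by (simp add: xl_def)
    next
      case Qy0: False
      show ?thesis
      proof (cases "Q y = 1")
        case True
        hence "sum Q ?B = 0" using sQ by simp
        hence "\<forall>x\<in>?B. Q x = 0" using sum_nonneg_eq_0_iff[of ?B Q] Qn by simp
        hence "\<forall>x\<in>?B. P x = 0" using pos by blast
        hence "sum P ?B = 0" by simp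
        hence "P y = 1" using sP by simp
        then show ?thesis using True split ls by (simp add: xl_def)
      next
        case False
        have "2 * (P y - Q y)^2 \<le> xl (P y) (Q y) + xl (1 - P y) (1 - Q y)"
          using Qn[of y] Qy0 Qy1 False Pn[of y] Py1 by (intro binP) auto
        then show ?thesis using split ls by simp
      qed
    qed
  qed
  ultimately show ?thesis by simp
qed

lemma state_dist_prob:
  assumes nn: "\<And>x y u. 0 \<le> th x y u" and st: "\<And>x u. (\<Sum>y\<in>UNIV. th x y u) = 1"
  shows "(\<forall>x. 0 \<le> state_dist th pl x0 t x) \<and> (\<Sum>x\<in>UNIV. state_dist th pl x0 t x) = 1"
proof (induction t)
  case 0 then show ?case by simp
next
  case (Suc t)
  have "(\<Sum>y\<in>UNIV. \<Sum>x\<in>UNIV. state_dist th pl x0 t x * th x y (pl x))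
        = (\<Sum>x\<in>UNIV. state_dist th pl x0 t x * (\<Sum>y\<in>UNIV. th x y (pl x)))"
    by (subst sum.swap) (simp add: sum_distrib_left)
  also have "\<dots> = 1" using Suc st by simp
  finally show ?case using Suc nn by (auto intro!: sum_nonneg)
qed

lemma avg_reward_bounds:
  assumes nn: "\<And>x y u. 0 \<le> th x y u" and st: "\<And>x u. (\<Sum>y\<in>UNIV. th x y u) = 1"
    and r: "\<forall>x u. 0 < r x u \<and> r x u \<le> 1"
  shows "0 \<le> avg_reward r th pl x0 \<and> avg_reward r th pl x0 \<le> 1"
proof -
  define g where "g t = (\<Sum>x\<in>UNIV. state_dist th pl x0 t x * r x (pl x))" for t
  have g: "0 \<le> g t \<and> g t \<le> 1" for t
  proof -
    have sd: "(\<forall>x. 0 \<le> state_dist th pl x0 t x) \<and> (\<Sum>x\<in>UNIV. state_dist th pl x0 t x) = 1"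
      by (rule state_dist_prob[OF nn st])
    have "g t \<le> (\<Sum>x\<in>UNIV. state_dist th pl x0 t x * 1)"
      unfolding g_def using sd r by (intro sum_mono mult_left_mono) auto
    moreover have "0 \<le> g t" unfolding g_def using sd r by (intro sum_nonneg) (simp add: less_imp_le)
    ultimately show ?thesis using sd by simp
  qed
  define A where "A T = (1 / real T) * (\<Sum>t<T. g t)" for T :: nat
  have A: "0 \<le> A T \<and> A T \<le> 1" for T
  proof (cases "T = 0")
    case True then show ?thesis by (simp add: A_def)
  next
    case False
    have "(\<Sum>t<T. g t) \<le> (\<Sum>t<T. 1)" using g by (intro sum_mono) auto
    moreover have "0 \<le> (\<Sum>t<T. g t)" using g by (intro sum_nonneg) auto
    ultimately show ?thesis using False by (simp add: A_def field_simps)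
  qed
  define L where "L = liminf (\<lambda>T. ereal (A T))"
  have "ereal 0 \<le> L" unfolding L_def using A by (intro Liminf_bounded) auto
  moreover have "L \<le> ereal 1" unfolding L_def using A by (intro Liminf_le) auto
  moreover have "avg_reward r th pl x0 = real_of_ereal L"
    unfolding avg_reward_def L_def A_def g_def by simp
  ultimately show ?thesis by (cases L) auto
qed

lemma cnt_xyu_le: "cnt_xyu xs us x y u t \<le> cnt_xu xs us x u t"
  unfolding cnt_xyu_def cnt_xu_def by (intro card_mono) auto

lemma cnt_sum:
  fixes xs :: "nat \<Rightarrow> 'a::finite"
  shows "(\<Sum>y\<in>UNIV. cnt_xyu xs us x y u t) = cnt_xu xs us x u t"
proof -
  have "{s\<in>{1..<t}. xs s = x \<and> us s = u} = (\<Union>y\<in>UNIV. {s\<in>{1..<t}. xs s = x \<and> us s = u \<and> xs (Suc s) = y})"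
    by auto
  moreover have "card (\<Union>y\<in>(UNIV::'a set). {s\<in>{1..<t}. xs s = x \<and> us s = u \<and> xs (Suc s) = y})
     = (\<Sum>y\<in>UNIV. card {s\<in>{1..<t}. xs s = x \<and> us s = u \<and> xs (Suc s) = y})"
    by (intro card_UN_disjoint) auto
  ultimately show ?thesis unfolding cnt_xyu_def cnt_xu_def by simp
qed

theorem lemma2:
  fixes p :: "'x::finite \<Rightarrow> 'x \<Rightarrow> 'u::finite \<Rightarrow> real"
    and r :: "'x \<Rightarrow> 'u \<Rightarrow> real"
    and a b :: real
    and xs :: "nat \<Rightarrow> 'x" and us :: "nat \<Rightarrow> 'u"
    and pol :: "nat \<Rightarrow> 'x \<Rightarrow> 'u"
    and k :: nat and pl :: "'x \<Rightarrow> 'u"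
    and th :: "'x \<Rightarrow> 'x \<Rightarrow> 'u \<Rightarrow> real"
  assumes p_nonneg: "\<forall>x y u. 0 \<le> p x y u"
    and p_stoch: "\<forall>x u. (\<Sum>y\<in>UNIV. p x y u) = 1"
    and r_range: "\<forall>x u. 0 < r x u \<and> r x u \<le> 1"
    and a_pos: "a > 0" and b_gt: "b > 2"
    and traj: "\<forall>s\<ge>1. p (xs s) (xs (Suc s)) (us s) > 0"
    and pol_max: "\<forall>j pl'. rbmle_index p r a b xs us j pl' \<le> rbmle_index p r a b xs us j (pol j)"
    and actions: "\<forall>j s. tau j \<le> s \<and> s < tau (Suc j) \<longrightarrow> us s = pol j (xs s)"
    and th_in: "th \<in> Theta p"
    and th_max: "\<forall>th'\<in>Theta p. rbmle_obj r a b xs us k pl th' \<le> rbmle_obj r a b xs us k pl th"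
  shows "\<forall>x y u. cnt_xu xs us x u (tau k) > 0 \<longrightarrow>
           \<bar>th x y u - phat xs us x y u (tau k)\<bar>
             \<le> sqrt (alpha a b (card (UNIV :: 'x set)) (card (UNIV :: 'u set)) (tau k) / (2 * real (cnt_xu xs us x u (tau k))))"
proof (intro allI impI)
  fix x0 y0 u0
  assume n0pos: "cnt_xu xs us x0 u0 (tau k) > 0"
  let ?t = "tau k"
  define n where "n x u = cnt_xu xs us x u ?t" for x u
  define ph where "ph x y u = phat xs us x y u ?t" for x y u
  define al where "al = alpha a b (card (UNIV :: 'x set)) (card (UNIV :: 'u set)) ?t"
  define th' where "th' x y u = (if n x u > 0 then ph x y u else th x y u)" for x y u
  have thT: "\<And>x y u. 0 \<le> th x y u \<and> th x y u \<le> 1" "\<And>x u. (\<Sum>y\<in>UNIV. th x y u) = 1"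
    "\<And>x y u. p x y u = 0 \<Longrightarrow> th x y u = 0"
    using th_in unfolding Theta_def by auto
  have ph_nn: "0 \<le> ph x y u" for x y u by (simp add: ph_def phat_def)
  have ph_le: "n x u > 0 \<Longrightarrow> ph x y u \<le> 1" for x y u
    using cnt_xyu_le[of xs us x y u ?t] by (simp add: ph_def phat_def n_def)
  have ph_sum: "n x u > 0 \<Longrightarrow> (\<Sum>y\<in>UNIV. ph x y u) = 1" for x u
  proof -
    assume "n x u > 0"
    hence "(\<Sum>y\<in>UNIV. ph x y u) = (\<Sum>y\<in>UNIV. real (cnt_xyu xs us x y u ?t)) / real (n x u)"
      by (simp add: ph_def phat_def n_def sum_divide_distrib)
    also have "\<dots> = 1" using \<open>n x u > 0\<close> cnt_sum[of xs us x u ?t]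
      by (simp add: n_def flip: of_nat_sum)
    finally show ?thesis .
  qed
  have ph_zero: "p x y u = 0 \<Longrightarrow> ph x y u = 0" for x y u
  proof -
    assume p0: "p x y u = 0"
    have "{s\<in>{1..<?t}. xs s = x \<and> us s = u \<and> xs (Suc s) = y} = {}"
    proof (rule ccontr)
      assume "{s\<in>{1..<?t}. xs s = x \<and> us s = u \<and> xs (Suc s) = y} \<noteq> {}"
      then obtain s where "s \<ge> 1" "xs s = x" "us s = u" "xs (Suc s) = y" by auto
      then have "p x y u > 0" using traj by metis
      then show False using p0 by simp
    qed
    then show ?thesis by (simp add: ph_def phat_def cnt_xyu_def)
  qed
  have th'_in: "th' \<in> Theta p"
  proof -
    have "(\<Sum>y\<in>UNIV. th' x y u) = 1" for x u
      by (cases "n x u > 0") (simp_all add: th'_def ph_sum thT)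
    moreover have "0 \<le> th' x y u \<and> th' x y u \<le> 1" for x y u
      by (cases "n x u > 0") (simp_all add: th'_def ph_nn ph_le thT)
    moreover have "p x y u = 0 \<Longrightarrow> th' x y u = 0" for x y u
      by (simp add: th'_def ph_zero thT)
    ultimately show ?thesis unfolding Theta_def by blast
  qed
  have al0: "0 \<le> al"
  proof -
    have "card (UNIV :: 'x set) > 0" "card (UNIV :: 'u set) > 0" by (simp_all add: card_gt_0_iff)
    hence c1: "1 \<le> real (card (UNIV :: 'x set))" "1 \<le> real (card (UNIV :: 'u set))" by linarith+
    have "1 \<le> real (tau k)" by (simp add: tau_def)
    hence t1: "1 \<le> real (tau k) powr b" using b_gt by (intro ge_one_powr_ge_zero) auto
    have c2: "1 \<le> real (card (UNIV :: 'x set))^2" using c1 by (simp add: one_le_power)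
    have "1 * 1 \<le> real (tau k) powr b * real (card (UNIV :: 'x set))^2"
      using t1 c2 by (intro mult_mono) auto
    hence "1 * 1 \<le> real (tau k) powr b * real (card (UNIV :: 'x set))^2 * real (card (UNIV :: 'u set))"
      using c1 by (intro mult_mono) auto
    thus ?thesis unfolding al_def alpha_def using a_pos by simp
  qed
  define J where "J = avg_reward r th pl (xs 1)"
  define J' where "J' = avg_reward r th' pl (xs 1)"
  have th0: "\<And>x y u. 0 \<le> th x y u" using thT(1) by simp
  have J1: "J \<le> 1" unfolding J_def using avg_reward_bounds[of th, OF th0 thT(2) r_range] by simp
  have th'T: "\<And>x y u. 0 \<le> th' x y u" "\<And>x u. (\<Sum>y\<in>UNIV. th' x y u) = 1"
    using th'_in unfolding Theta_def by auto
  have J'0: "0 \<le> J'" unfolding J'_def using avg_reward_bounds[of th', OF th'T r_range] by simp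
  define S where "S = (\<Sum>x\<in>UNIV. \<Sum>u\<in>UNIV. ereal (real (n x u)) * KL (\<lambda>y. ph x y u) (\<lambda>y. th x y u))"
  have obj: "rbmle_obj r a b xs us k pl th = ereal (al * J) - S"
    unfolding rbmle_obj_def S_def al_def J_def n_def ph_def by simp
  have KLself: "KL (\<lambda>y. ph x y u) (\<lambda>y. ph x y u) = 0" for x u
    unfolding KL_def by (intro sum.neutral ballI) (simp add: zero_ereal_def)
  have obj': "rbmle_obj r a b xs us k pl th' = ereal (al * J')"
  proof -
    have "(\<Sum>x\<in>UNIV. \<Sum>u\<in>UNIV. ereal (real (n x u)) * KL (\<lambda>y. ph x y u) (\<lambda>y. th' x y u)) = 0"
    proof (intro sum.neutral ballI)
      fix x u
      show "ereal (real (n x u)) * KL (\<lambda>y. ph x y u) (\<lambda>y. th' x y u) = 0"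
      proof (cases "n x u > 0")
        case True
        then have "(\<lambda>y. th' x y u) = (\<lambda>y. ph x y u)" by (simp add: th'_def)
        then show ?thesis by (simp add: KLself)
      qed simp
    qed
    then show ?thesis
      unfolding rbmle_obj_def al_def J'_def n_def ph_def by simp
  qed
  have KLb: "n x u > 0 \<Longrightarrow> ereal (2 * (ph x y u - th x y u)^2) \<le> KL (\<lambda>y. ph x y u) (\<lambda>y. th x y u)" for x y u
    using KL_pinsker[of "\<lambda>y. ph x y u" "\<lambda>y. th x y u" y] ph_nn ph_sum thT by auto
  have tnn: "0 \<le> ereal (real (n x u)) * KL (\<lambda>y. ph x y u) (\<lambda>y. th x y u)" for x u
  proof (cases "n x u > 0")
    case True
    have "ereal 0 \<le> ereal (2 * (ph x x u - th x x u)^2)" by simp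
    also have "\<dots> \<le> KL (\<lambda>y. ph x y u) (\<lambda>y. th x y u)" using KLb True by blast
    finally have "0 \<le> KL (\<lambda>y. ph x y u) (\<lambda>y. th x y u)" by (simp add: zero_ereal_def)
    then show ?thesis by (simp add: ereal_zero_le_0_iff)
  next
    case False then show ?thesis by (simp add: zero_ereal_def[symmetric])
  qed
  have S0: "0 \<le> S" unfolding S_def using tnn by (intro sum_nonneg) auto
  have T0S: "ereal (real (n x0 u0)) * KL (\<lambda>y. ph x0 y u0) (\<lambda>y. th x0 y u0) \<le> S"
  proof -
    have "ereal (real (n x0 u0)) * KL (\<lambda>y. ph x0 y u0) (\<lambda>y. th x0 y u0)
       \<le> (\<Sum>u\<in>UNIV. ereal (real (n x0 u)) * KL (\<lambda>y. ph x0 y u) (\<lambda>y. th x0 y u))"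
      by (rule mem_le_sum'[where f="\<lambda>u. ereal (real (n x0 u)) * KL (\<lambda>y. ph x0 y u) (\<lambda>y. th x0 y u)"])
         (auto simp: tnn)
    also have "\<dots> \<le> S" unfolding S_def
      by (rule mem_le_sum'[where f="\<lambda>x. \<Sum>u\<in>UNIV. ereal (real (n x u)) * KL (\<lambda>y. ph x y u) (\<lambda>y. th x y u)"])
         (auto simp: tnn intro!: sum_nonneg)
    finally show ?thesis .
  qed
  have "ereal (al * J') \<le> ereal (al * J) - S"
  proof -
    have "rbmle_obj r a b xs us k pl th' \<le> rbmle_obj r a b xs us k pl th" using th_max th'_in by blast
    then show ?thesis unfolding obj obj' .
  qed
  then obtain sv where Sv: "S = ereal sv" and sv: "al * J' \<le> al * J - sv"
    using S0 by (cases S) auto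
  have "al * (J - J') \<le> al * 1"
    using al0 J1 J'0 by (intro mult_left_mono) auto
  hence svle: "sv \<le> al" using sv by (simp add: algebra_simps)
  have "ereal (real (n x0 u0)) * ereal (2 * (ph x0 y0 u0 - th x0 y0 u0)^2)
      \<le> ereal (real (n x0 u0)) * KL (\<lambda>y. ph x0 y u0) (\<lambda>y. th x0 y u0)"
    using KLb[of x0 u0 y0] n0pos by (intro ereal_mult_left_mono) (auto simp: n_def)
  hence "ereal (real (n x0 u0) * (2 * (ph x0 y0 u0 - th x0 y0 u0)^2)) \<le> ereal sv"
    using T0S Sv by (metis order_trans times_ereal.simps(1))
  hence "real (n x0 u0) * (2 * (ph x0 y0 u0 - th x0 y0 u0)^2) \<le> sv" by simp
  hence "2 * real (n x0 u0) * (th x0 y0 u0 - ph x0 y0 u0)^2 \<le> al"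
    using svle by (simp add: power2_commute algebra_simps)
  hence "(th x0 y0 u0 - ph x0 y0 u0)^2 \<le> al / (2 * real (n x0 u0))"
    using n0pos by (simp add: n_def field_simps)
  hence "sqrt ((th x0 y0 u0 - ph x0 y0 u0)^2) \<le> sqrt (al / (2 * real (n x0 u0)))"
    by (rule real_sqrt_le_mono)
  then show "\<bar>th x0 y0 u0 - phat xs us x0 y0 u0 (tau k)\<bar>
             \<le> sqrt (alpha a b (card (UNIV :: 'x set)) (card (UNIV :: 'u set)) (tau k) / (2 * real (cnt_xu xs us x0 u0 (tau k))))"
    by (simp add: ph_def al_def n_def)
qed

end
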